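(* Let $(\varpi,\nu)$ be sub-consistent, where $\varpi$ is a finite measure on $\mathcal X\times\mathcal X$ and $\nu$ a probability measure on $\mathcal X\times\mathcal X^*$ with $\int n\,d\nu<\infty$. Then there exists a sequence $(\hat\varpi_n,\hat\nu_n)\in\mathcal M_s$ such that (i) each $(\hat\varpi_n,\hat\nu_n)$ is consistent, and (ii) $(\hat\varpi_n,\hat\nu_n)\to(\varpi,\nu)$ as $n\to\infty$.
   Context: $\mathcal X$ is a finite alphabet, $\mathcal X^*=\bigcup_{n\ge0}\{n\}\times\mathcal X^n$ with elements $c=(n,a_1,\dots,a_n)$, $m(a,c)=\sum_i\mathbf 1\{a_i=a\}$. $(\varpi,\nu)$ is sub-consistent if $\varpi(a,b)\ge\sum_{c\in\mathcal X^*}m(b,c)\nu(a,c)$ for all $a,b\in\mathcal X$, consistent if equality holds for all $a,b$. $\mathcal M_s$ is the set of sub-consistent pairs in (finite measures on $\mathcal X\times\mathcal X$) $\times$ (probability measures $\nu$ on $\mathcal X\times\mathcal X^*$ with $\int n\,d\nu<\infty$), with the weak topology; convergence is in this topology. *)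

theory Defs
  imports "HOL-Probability.Probability"
begin

text \<open>The alphabet X is a finite type 'a. An element c = (n, a_1, ..., a_n) of X^* is
represented by the list [a_1, ..., a_n] (so n = length c), and m(a,c) = count_list c a.
A finite measure on the finite set X x X is given by its nonnegative point masses
varpi :: 'a x 'a => real. A probability measure on the countable discrete space
X x X^* is a pmf.\<close>

definition mult :: "'a \<Rightarrow> 'a list \<Rightarrow> real" where
  "mult a c = real (count_list c a)"

definition finite_meas :: "('a \<times> 'a \<Rightarrow> real) \<Rightarrow> bool" where
  "finite_meas w \<longleftrightarrow> (\<forall>x. 0 \<le> w x)"

definition finite_mean :: "('a \<times> 'a list) pmf \<Rightarrow> bool" where
  "finite_mean \<nu> \<longleftrightarrow> integrable (measure_pmf \<nu>) (\<lambda>(a, c). real (length c))"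

text \<open>sum over c of m(b,c) nu(a,c), written as an integral against nu\<close>
definition flow :: "('a \<times> 'a list) pmf \<Rightarrow> 'a \<Rightarrow> 'a \<Rightarrow> real" where
  "flow \<nu> a b = measure_pmf.expectation \<nu> (\<lambda>(a', c). if a' = a then mult b c else 0)"

definition sub_consistent :: "('a \<times> 'a \<Rightarrow> real) \<Rightarrow> ('a \<times> 'a list) pmf \<Rightarrow> bool" where
  "sub_consistent w \<nu> \<longleftrightarrow> (\<forall>a b. w (a, b) \<ge> flow \<nu> a b)"

definition consistent :: "('a \<times> 'a \<Rightarrow> real) \<Rightarrow> ('a \<times> 'a list) pmf \<Rightarrow> bool" where
  "consistent w \<nu> \<longleftrightarrow> (\<forall>a b. w (a, b) = flow \<nu> a b)"

definition in_Ms :: "('a \<times> 'a \<Rightarrow> real) \<Rightarrow> ('a \<times> 'a list) pmf \<Rightarrow> bool" where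
  "in_Ms w \<nu> \<longleftrightarrow> finite_meas w \<and> finite_mean \<nu> \<and> sub_consistent w \<nu>"

text \<open>Weak convergence. On the finite discrete space X x X this is convergence of all
point masses; on the discrete space X x X^* every bounded function is continuous.\<close>
definition weak_conv_meas :: "(nat \<Rightarrow> 'a \<times> 'a \<Rightarrow> real) \<Rightarrow> ('a \<times> 'a \<Rightarrow> real) \<Rightarrow> bool" where
  "weak_conv_meas ws w \<longleftrightarrow> (\<forall>x. (\<lambda>k. ws k x) \<longlonglongrightarrow> w x)"

definition weak_conv_pmf :: "(nat \<Rightarrow> 'b pmf) \<Rightarrow> 'b pmf \<Rightarrow> bool" where
  "weak_conv_pmf \<nu>s \<nu> \<longleftrightarrow>
     (\<forall>f :: 'b \<Rightarrow> real. bounded (range f) \<longrightarrow>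
        (\<lambda>k. measure_pmf.expectation (\<nu>s k) f) \<longlonglongrightarrow> measure_pmf.expectation \<nu> f)"

end

theory Submission imports Defs begin

definition mix :: "real \<Rightarrow> 'b pmf \<Rightarrow> 'b pmf \<Rightarrow> 'b pmf" where
  "mix e p q = bind_pmf (bernoulli_pmf e) (\<lambda>b. if b then p else q)"

lemma pmf_mix: "0 \<le> e \<Longrightarrow> e \<le> 1 \<Longrightarrow> pmf (mix e p q) x = e * pmf p x + (1 - e) * pmf q x"
  unfolding mix_def pmf_bind by simp

lemma mix_integrable_integral:
  fixes f :: "'b \<Rightarrow> real"
  assumes e: "0 \<le> e" "e \<le> 1" and ip: "integrable (measure_pmf p) f" and iq: "integrable (measure_pmf q) f"
  shows "integrable (measure_pmf (mix e p q)) f \<and>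
    measure_pmf.expectation (mix e p q) f = e * measure_pmf.expectation p f + (1 - e) * measure_pmf.expectation q f"
proof -
  have I: "integrable (measure_pmf r) f \<longleftrightarrow> integrable (count_space UNIV) (\<lambda>x. pmf r x * f x)" for r :: "'b pmf"
    unfolding measure_pmf_eq_density by (subst integrable_density) auto
  have J: "measure_pmf.expectation r f = integral\<^sup>L (count_space UNIV) (\<lambda>x. pmf r x * f x)" for r :: "'b pmf"
    unfolding measure_pmf_eq_density by (subst integral_density) auto
  have eq: "(\<lambda>x. pmf (mix e p q) x * f x) = (\<lambda>x. e * (pmf p x * f x) + (1 - e) * (pmf q x * f x))"
    using e by (auto simp: pmf_mix algebra_simps)
  have ip': "integrable (count_space UNIV) (\<lambda>x. pmf p x * f x)" using ip I by blast
  have iq': "integrable (count_space UNIV) (\<lambda>x. pmf q x * f x)" using iq I by blast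
  show ?thesis
    unfolding I J eq using ip' iq' by simp
qed

lemma count_list_replicate': "count_list (replicate n y) x = (if x = y then n else 0)"
  by (induction n) auto

lemma count_concat_rep:
  "distinct xs \<Longrightarrow> count_list (concat (map (\<lambda>b. replicate (N b) b) xs)) x = (if x \<in> set xs then N x else 0)"
  by (induction xs) (auto simp: count_list_replicate')

lemma abs_expectation_le:
  fixes f :: "'b \<Rightarrow> real"
  assumes B: "\<And>x. \<bar>f x\<bar> \<le> B"
  shows "\<bar>measure_pmf.expectation p f\<bar> \<le> B"
proof -
  have int: "integrable (measure_pmf p) f"
    by (rule measure_pmf.integrable_const_bound[where B=B]) (use B in auto)
  have "measure_pmf.expectation p f \<le> B"
    by (rule measure_pmf.integral_le_const[OF int]) (use B abs_le_D1 in auto)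
  moreover have "- B \<le> measure_pmf.expectation p f"
    by (rule measure_pmf.integral_ge_const[OF int]) (intro AE_I2, metis B abs_le_iff minus_le_iff)
  ultimately show ?thesis by auto
qed

lemma conv_by_eps:
  fixes x :: "nat \<Rightarrow> real"
  assumes "\<And>k. \<bar>x k - L\<bar> \<le> C * (1 / (real k + 2))"
  shows "x \<longlonglongrightarrow> L"
proof -
  have e: "(\<lambda>k. C * (1 / (real k + 2))) \<longlonglongrightarrow> 0"
  proof -
    have "(\<lambda>k. 1 / (real k + 2)) \<longlonglongrightarrow> 0"
      using LIMSEQ_ignore_initial_segment[OF lim_inverse_n', of 2]
      by (simp add: add.commute)
    then show ?thesis using tendsto_mult_right_zero by blast
  qed
  have "(\<lambda>k. x k - L) \<longlonglongrightarrow> 0"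
    by (rule tendsto_0_le[OF e, where K=1], intro always_eventually allI)
       (use assms in \<open>auto intro: order_trans[OF _ divide_right_mono[OF abs_ge_self]]\<close>)
  then show ?thesis using Lim_null by blast
qed

definition allxs :: "'a::finite list" where
  "allxs = (SOME xs. set xs = UNIV \<and> distinct xs)"

lemma allxs: "set (allxs :: 'a::finite list) = UNIV \<and> distinct (allxs :: 'a list)"
  unfolding allxs_def by (rule someI_ex) (use finite_distinct_list[of "UNIV::'a set"] in auto)

definition cl :: "('a::finite \<Rightarrow> nat) \<Rightarrow> 'a list" where
  "cl N = concat (map (\<lambda>b. replicate (N b) b) allxs)"

lemma count_cl: "count_list (cl N) x = N x"
  unfolding cl_def using allxs count_concat_rep[of allxs N x] by (metis UNIV_I)

theorem lemma3p7:
  fixes w :: "'a::finite \<times> 'a \<Rightarrow> real" and \<nu> :: "('a \<times> 'a list) pmf"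
  assumes "in_Ms w \<nu>"
  shows "\<exists>ws \<nu>s. (\<forall>k. in_Ms (ws k) (\<nu>s k) \<and> consistent (ws k) (\<nu>s k))
                 \<and> weak_conv_meas ws w \<and> weak_conv_pmf \<nu>s \<nu>"
proof -
  have fm: "finite_mean \<nu>" and sc: "sub_consistent w \<nu>" using assms unfolding in_Ms_def by auto
  have ilen: "integrable (measure_pmf \<nu>) (\<lambda>(a, c). real (length c))" using fm finite_mean_def by blast
  define d where "d a b = w (a, b) - flow \<nu> a b" for a b
  have d0: "d a b \<ge> 0" for a b using sc unfolding sub_consistent_def d_def by auto
  define n where "n = real CARD('a)"
  have n1: "n \<ge> 1" unfolding n_def using finite_UNIV_card_ge_0[where 'a='a] by simp
  define eps where "eps k = 1 / (real k + 2)" for k :: nat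
  have eps0: "0 < eps k" "eps k \<le> 1" for k unfolding eps_def by auto
  define N where "N k a b = nat \<lfloor>n * d a b / eps k\<rfloor>" for k a b
  define \<mu> where "\<mu> k = map_pmf (\<lambda>a. (a, cl (N k a))) (pmf_of_set (UNIV :: 'a set))" for k
  define \<nu>s where "\<nu>s k = mix (eps k) (\<mu> k) \<nu>" for k
  define ws where "ws k = (\<lambda>(a, b). flow (\<nu>s k) a b)" for k
  have fin\<mu>: "finite (set_pmf (\<mu> k))" for k unfolding \<mu>_def by simp
  have int\<mu>: "integrable (measure_pmf (\<mu> k)) f" for k and f :: "'a \<times> 'a list \<Rightarrow> real"
    by (rule integrable_measure_pmf_finite[OF fin\<mu>])
  define g where "g a b = (\<lambda>(a', c). if a' = a then mult b c else 0)" for a b :: 'a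
  have intg: "integrable (measure_pmf \<nu>) (g a b)" for a b
  proof (rule Bochner_Integration.integrable_bound[OF ilen])
    show "g a b \<in> borel_measurable (measure_pmf \<nu>)" by simp
    show "AE x in measure_pmf \<nu>. norm (g a b x) \<le> norm ((\<lambda>(a, c). real (length c)) x)"
      by (intro AE_I2) (auto simp: g_def mult_def count_le_length)
  qed
  have flow\<mu>: "flow (\<mu> k) a b = real (N k a b) / n" for k a b
  proof -
    have "flow (\<mu> k) a b = (\<Sum>a'\<in>UNIV. (if a' = a then mult b (cl (N k a')) else 0)) / n"
      unfolding flow_def \<mu>_def n_def by (simp add: integral_pmf_of_set)
    also have "\<dots> = real (N k a b) / n" by (simp add: mult_def count_cl)
    finally show ?thesis .
  qed
  have flow\<nu>s: "flow (\<nu>s k) a b = eps k * (real (N k a b) / n) + (1 - eps k) * flow \<nu> a b" for k a b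
    using mix_integrable_integral[OF less_imp_le[OF eps0(1)] eps0(2) int\<mu>[of k] intg[of a b]]
    unfolding \<nu>s_def flow_def[symmetric] g_def[symmetric] flow\<mu>[symmetric]
    by (simp add: flow_def g_def)
  have flow_nonneg: "flow p a b \<ge> 0" for p a b
    unfolding flow_def by (rule integral_nonneg_AE) (auto simp: mult_def)
  have Ms: "in_Ms (ws k) (\<nu>s k) \<and> consistent (ws k) (\<nu>s k)" for k
  proof -
    have "integrable (measure_pmf (\<nu>s k)) (\<lambda>(a, c). real (length c))"
      unfolding \<nu>s_def using mix_integrable_integral[OF less_imp_le[OF eps0(1)] eps0(2) int\<mu> ilen] by blast
    then show ?thesis
      unfolding in_Ms_def finite_meas_def finite_mean_def sub_consistent_def consistent_def ws_def
      using flow_nonneg by auto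
  qed
  have conv1: "weak_conv_meas ws w"
    unfolding weak_conv_meas_def
  proof
    fix x :: "'a \<times> 'a"
    obtain a b where x: "x = (a, b)" by fastforce
    show "(\<lambda>k. ws k x) \<longlonglongrightarrow> w x"
    proof (rule conv_by_eps[where C = "1 + \<bar>flow \<nu> a b\<bar>"])
      fix k
      define t where "t = n * d a b / eps k"
      have t0: "t \<ge> 0" unfolding t_def using d0[of a b] eps0(1)[of k] n1 by simp
      have Nt: "real (N k a b) \<le> t" "t - 1 < real (N k a b)"
        unfolding N_def t_def[symmetric] using t0 by linarith+
      have et: "eps k * t / n = d a b" unfolding t_def using eps0(1)[of k] n1 by simp
      have up: "eps k * (real (N k a b) / n) \<le> d a b"
      proof -
        have "eps k * real (N k a b) \<le> eps k * t"
          using mult_left_mono[OF Nt(1) less_imp_le[OF eps0(1)[of k]]] .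
        then have "eps k * real (N k a b) / n \<le> eps k * t / n"
          using n1 by (simp add: divide_right_mono)
        then show ?thesis using et by simp
      qed
      have lo: "d a b - eps k \<le> eps k * (real (N k a b) / n)"
      proof -
        have "eps k * (t - 1) \<le> eps k * real (N k a b)"
          using Nt(2) eps0(1)[of k] by simp
        then have "eps k * (t - 1) / n \<le> eps k * (real (N k a b) / n)"
          using n1 by (simp add: divide_right_mono)
        moreover have "eps k * (t - 1) / n = d a b - eps k / n"
          using et n1 by (simp add: right_diff_distrib diff_divide_distrib)
        moreover have "eps k / n \<le> eps k" using n1 eps0(1)[of k]
          by (simp add: divide_le_eq)
        ultimately show ?thesis by linarith
      qed
      have "ws k x - w x = (eps k * (real (N k a b) / n) - d a b) - eps k * flow \<nu> a b"
        unfolding ws_def x flow\<nu>s d_def by (simp add: algebra_simps)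
      moreover have "\<bar>eps k * flow \<nu> a b\<bar> \<le> eps k * \<bar>flow \<nu> a b\<bar>"
        using eps0(1)[of k] by (simp add: abs_mult)
      ultimately have "\<bar>ws k x - w x\<bar> \<le> eps k + eps k * \<bar>flow \<nu> a b\<bar>"
        using up lo by linarith
      then show "\<bar>ws k x - w x\<bar> \<le> (1 + \<bar>flow \<nu> a b\<bar>) * (1 / (real k + 2))"
        unfolding eps_def by (simp add: add_divide_distrib)
    qed
  qed
  have conv2: "weak_conv_pmf \<nu>s \<nu>"
    unfolding weak_conv_pmf_def
  proof (intro allI impI)
    fix f :: "'a \<times> 'a list \<Rightarrow> real"
    assume "bounded (range f)"
    then obtain B where B: "\<And>x. \<bar>f x\<bar> \<le> B" by (metis bounded_real image_eqI iso_tuple_UNIV_I)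
    have intf: "integrable (measure_pmf \<nu>) f"
      by (rule measure_pmf.integrable_const_bound[where B=B]) (use B in auto)
    show "(\<lambda>k. measure_pmf.expectation (\<nu>s k) f) \<longlonglongrightarrow> measure_pmf.expectation \<nu> f"
    proof (rule conv_by_eps[where C = "2 * B"])
      fix k
      have "measure_pmf.expectation (\<nu>s k) f - measure_pmf.expectation \<nu> f
            = eps k * (measure_pmf.expectation (\<mu> k) f - measure_pmf.expectation \<nu> f)"
        using mix_integrable_integral[OF less_imp_le[OF eps0(1)] eps0(2) int\<mu>[of k] intf]
        unfolding \<nu>s_def by (simp add: algebra_simps)
      moreover have "\<bar>measure_pmf.expectation (\<mu> k) f - measure_pmf.expectation \<nu> f\<bar> \<le> 2 * B"
        using abs_expectation_le[where f=f and B=B and p="\<mu> k", OF B] abs_expectation_le[where f=f and B=B and p=\<nu>, OF B] by linarith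
      ultimately have "\<bar>measure_pmf.expectation (\<nu>s k) f - measure_pmf.expectation \<nu> f\<bar> \<le> eps k * (2 * B)"
        using eps0(1)[of k] by (simp add: abs_mult)
      then show "\<bar>measure_pmf.expectation (\<nu>s k) f - measure_pmf.expectation \<nu> f\<bar> \<le> 2 * B * (1 / (real k + 2))"
        unfolding eps_def by simp
    qed
  qed
  show ?thesis using Ms conv1 conv2 by blast
qed

end
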